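(* Let $\epsilon_{2q^*}$ be the smallest number such that $\big\|\sum_{j\in J}g_j\big\|^2\ge(1-\epsilon_{2q^*})\sum_{j\in J}\|g_j\|^2$ for all $J\subseteq\{1,\dots,q\}$ with $|J|\le 2q^*$ and all $g_j\in H_j$, $j\in J$. Then $\rho_{q^*}<1$ if and only if $\epsilon_{2q^*}<1$.
   Context: Let $q\ge1$ and let $X=(X_1,\dots,X_q)^T$ be a random vector with real-valued components. The space $L^2(\mathbb P^X)$ carries the inner product $\langle g,h\rangle=\mathbb E[g(X)h(X)]$ and norm $\|g\|=\langle g,g\rangle^{1/2}$. Let $H_q=L^2(\mathbb P^{X_q})$ and $H_j=\{h\in L^2(\mathbb P^{X_j}):\mathbb E[h(X_j)]=0\}$ for $j<q$, viewed as subspaces of $L^2(\mathbb P^X)$ via $x\mapsto h(x_j)$; for $J\subseteq\{1,\dots,q\}$ let $H_J=\sum_{j\in J}H_j$ (with $H_\emptyset=\{0\}$). Let $q^*\ge1$ be an integer. Let $\rho_{q^*}$ be the supremum of $\langle h_1,h_2\rangle/(\|h_1\|\|h_2\|)$ over all nonzero $h_1\in H_{J_1}$, $h_2\in H_{J_2}$ and all $J_1,J_2\subseteq\{1,\dots,q\}$ with $J_1\cap J_2=\emptyset$ and $|J_1|,|J_2|\le q^*$. *)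

theory Defs
  imports "HOL-Probability.Probability"
begin

text \<open>Random vector X = (X 1, ..., X q) on a probability space M. Elements of L2(P^X)
  are represented as the random variables g(X) on M; the inner product is E[g(X) h(X)].\<close>

definition l2_inner :: "'a measure \<Rightarrow> ('a \<Rightarrow> real) \<Rightarrow> ('a \<Rightarrow> real) \<Rightarrow> real" where
  "l2_inner M f g = integral\<^sup>L M (\<lambda>\<omega>. f \<omega> * g \<omega>)"

definition l2_norm :: "'a measure \<Rightarrow> ('a \<Rightarrow> real) \<Rightarrow> real" where
  "l2_norm M f = sqrt (l2_inner M f f)"

definition Hsp :: "'a measure \<Rightarrow> (nat \<Rightarrow> 'a \<Rightarrow> real) \<Rightarrow> nat \<Rightarrow> nat \<Rightarrow> ('a \<Rightarrow> real) set" where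
  "Hsp M X q j = {(\<lambda>\<omega>. h (X j \<omega>)) | h. h \<in> borel_measurable borel
       \<and> integrable M (\<lambda>\<omega>. (h (X j \<omega>))\<^sup>2)
       \<and> (j < q \<longrightarrow> integral\<^sup>L M (\<lambda>\<omega>. h (X j \<omega>)) = 0)}"

definition HJ :: "'a measure \<Rightarrow> (nat \<Rightarrow> 'a \<Rightarrow> real) \<Rightarrow> nat \<Rightarrow> nat set \<Rightarrow> ('a \<Rightarrow> real) set" where
  "HJ M X q J = {(\<lambda>\<omega>. \<Sum>j\<in>J. g j \<omega>) | g. \<forall>j\<in>J. g j \<in> Hsp M X q j}"

text \<open>rho_{q*}, as an extended real (sup of the empty set is -infinity).\<close>
definition rho :: "'a measure \<Rightarrow> (nat \<Rightarrow> 'a \<Rightarrow> real) \<Rightarrow> nat \<Rightarrow> nat \<Rightarrow> ereal" where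
  "rho M X q qs = Sup {ereal (l2_inner M h1 h2 / (l2_norm M h1 * l2_norm M h2)) | J1 J2 h1 h2.
      J1 \<subseteq> {1..q} \<and> J2 \<subseteq> {1..q} \<and> J1 \<inter> J2 = {} \<and> card J1 \<le> qs \<and> card J2 \<le> qs
      \<and> h1 \<in> HJ M X q J1 \<and> h2 \<in> HJ M X q J2 \<and> l2_norm M h1 \<noteq> 0 \<and> l2_norm M h2 \<noteq> 0}"

definition eps :: "'a measure \<Rightarrow> (nat \<Rightarrow> 'a \<Rightarrow> real) \<Rightarrow> nat \<Rightarrow> nat \<Rightarrow> real" where
  "eps M X q m = Inf {e. \<forall>J g. J \<subseteq> {1..q} \<and> card J \<le> m \<and> (\<forall>j\<in>J. g j \<in> Hsp M X q j) \<longrightarrow>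
      (l2_norm M (\<lambda>\<omega>. \<Sum>j\<in>J. g j \<omega>))\<^sup>2 \<ge> (1 - e) * (\<Sum>j\<in>J. (l2_norm M (g j))\<^sup>2)}"

end

theory Submission
  imports Defs
begin

definition sqi :: "'a measure \<Rightarrow> ('a \<Rightarrow> real) \<Rightarrow> bool" where
  "sqi M f \<longleftrightarrow> f \<in> borel_measurable M \<and> integrable M (\<lambda>w. (f w)\<^sup>2)"

lemma sqi_prod:
  assumes "sqi M f" "sqi M g"
  shows "integrable M (\<lambda>w. f w * g w)"
proof (rule Bochner_Integration.integrable_bound[where f="\<lambda>w. (f w)\<^sup>2 + (g w)\<^sup>2"])
  show "integrable M (\<lambda>w. (f w)\<^sup>2 + (g w)\<^sup>2)" using assms by (auto simp: sqi_def)
  show "(\<lambda>w. f w * g w) \<in> borel_measurable M" using assms by (auto simp: sqi_def)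
  show "AE x in M. norm (f x * g x) \<le> norm ((f x)\<^sup>2 + (g x)\<^sup>2)"
  proof (rule AE_I2)
    fix x
    have "\<bar>f x * g x\<bar> \<le> (f x)\<^sup>2 + (g x)\<^sup>2"
    proof -
      have "0 \<le> (\<bar>f x\<bar> - \<bar>g x\<bar>)\<^sup>2" by simp
      then have "2 * (\<bar>f x\<bar> * \<bar>g x\<bar>) \<le> (f x)\<^sup>2 + (g x)\<^sup>2"
        by (simp add: power2_eq_square algebra_simps)
      moreover have "0 \<le> \<bar>f x\<bar> * \<bar>g x\<bar>" by simp
      ultimately have "\<bar>f x\<bar> * \<bar>g x\<bar> \<le> (f x)\<^sup>2 + (g x)\<^sup>2" by linarith
      then show ?thesis by (simp add: abs_mult)
    qed
    then show "norm (f x * g x) \<le> norm ((f x)\<^sup>2 + (g x)\<^sup>2)" by simp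
  qed
qed

lemma sqi_add:
  assumes "sqi M f" "sqi M g"
  shows "sqi M (\<lambda>w. f w + g w)"
proof -
  have e: "(\<lambda>w. (f w + g w)\<^sup>2) = (\<lambda>w. (f w)\<^sup>2 + (2 * (f w * g w) + (g w)\<^sup>2))"
    by (auto simp: power2_eq_square algebra_simps)
  show ?thesis using assms sqi_prod[OF assms] unfolding sqi_def e by auto
qed

lemma sqi_scale:
  assumes "sqi M f"
  shows "sqi M (\<lambda>w. k * f w)"
  using assms by (auto simp: sqi_def power_mult_distrib)

lemma sqi_sum:
  assumes "\<And>j. j \<in> J \<Longrightarrow> sqi M (g j)"
  shows "sqi M (\<lambda>w. \<Sum>j\<in>J. g j w)"
  using assms
proof (induction J rule: infinite_finite_induct)
  case (infinite A) then show ?case by (simp add: sqi_def)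
next
  case empty then show ?case by (simp add: sqi_def)
next
  case (insert x F)
  then show ?case by (simp add: sqi_add)
qed

lemma Hsp_sqi:
  assumes "f \<in> Hsp M X q j" "X j \<in> borel_measurable M"
  shows "sqi M f"
  using assms by (auto simp: Hsp_def sqi_def)

lemma Hsp_scale:
  assumes "f \<in> Hsp M X q j"
  shows "(\<lambda>w. k * f w) \<in> Hsp M X q j"
proof -
  obtain h where h: "f = (\<lambda>w. h (X j w))" "h \<in> borel_measurable borel"
    "integrable M (\<lambda>w. (h (X j w))\<^sup>2)" "j < q \<longrightarrow> integral\<^sup>L M (\<lambda>w. h (X j w)) = 0"
    using assms by (auto simp: Hsp_def)
  show ?thesis unfolding Hsp_def
    apply (rule CollectI, rule exI[of _ "\<lambda>x. k * h x"])
    using h by (auto simp: power_mult_distrib)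
qed

lemma l2_norm_sq: "(l2_norm M f)\<^sup>2 = integral\<^sup>L M (\<lambda>w. (f w)\<^sup>2)"
proof -
  have "0 \<le> integral\<^sup>L M (\<lambda>w. (f w)\<^sup>2)" by (rule integral_nonneg_AE) auto
  then show ?thesis unfolding l2_norm_def l2_inner_def by (simp add: power2_eq_square)
qed

lemma sum_sq_le_card: "(\<Sum>j\<in>J. (g j :: real))\<^sup>2 \<le> real (card J) * (\<Sum>j\<in>J. (g j)\<^sup>2)"
proof (cases "finite J")
  case True
  have "(\<Sum>j\<in>J. 1 * g j)\<^sup>2 \<le> (\<Sum>j\<in>J. (1::real)\<^sup>2) * (\<Sum>j\<in>J. (g j)\<^sup>2)"
    by (rule Cauchy_Schwarz_ineq_sum)
  then show ?thesis by simp
qed simp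

lemma int_sum_sq_le:
  assumes "finite J" "\<And>j. j \<in> J \<Longrightarrow> sqi M (g j)"
  shows "integral\<^sup>L M (\<lambda>w. (\<Sum>j\<in>J. g j w)\<^sup>2) \<le> real (card J) * (\<Sum>j\<in>J. integral\<^sup>L M (\<lambda>w. (g j w)\<^sup>2))"
proof -
  have "integral\<^sup>L M (\<lambda>w. (\<Sum>j\<in>J. g j w)\<^sup>2) \<le> integral\<^sup>L M (\<lambda>w. real (card J) * (\<Sum>j\<in>J. (g j w)\<^sup>2))"
    apply (rule integral_mono)
    using sqi_sum[of J M g] assms sum_sq_le_card by (auto simp: sqi_def)
  also have "\<dots> = real (card J) * (\<Sum>j\<in>J. integral\<^sup>L M (\<lambda>w. (g j w)\<^sup>2))"
    using assms by (simp add: integral_sum sqi_def)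
  finally show ?thesis .
qed

lemma zero_inner:
  assumes "sqi M f" "sqi M g" "integral\<^sup>L M (\<lambda>w. (f w)\<^sup>2) = 0"
  shows "integral\<^sup>L M (\<lambda>w. f w * g w) = 0"
proof (rule ccontr)
  define s where "s = integral\<^sup>L M (\<lambda>w. f w * g w)"
  define B where "B = integral\<^sup>L M (\<lambda>w. (g w)\<^sup>2)"
  assume "s \<noteq> 0"
  define t where "t = - (B + 1) / (2 * s)"
  have e: "(\<lambda>w. (g w + t * f w)\<^sup>2) = (\<lambda>w. (g w)\<^sup>2 + (2 * t * (f w * g w) + t\<^sup>2 * (f w)\<^sup>2))"
    by (auto simp: power2_eq_square algebra_simps)
  have "0 \<le> integral\<^sup>L M (\<lambda>w. (g w + t * f w)\<^sup>2)" by (rule integral_nonneg_AE) auto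
  also have "\<dots> = B + 2 * t * s"
    unfolding e using assms sqi_prod[OF assms(1,2)] by (simp add: sqi_def B_def s_def)
  also have "\<dots> = -1" using \<open>s \<noteq> 0\<close> by (simp add: t_def field_simps)
  finally show False by simp
qed

lemma l2_norm_nonneg: "0 \<le> l2_norm M f"
proof -
  have "0 \<le> l2_inner M f f" unfolding l2_inner_def by (rule integral_nonneg_AE) auto
  then show ?thesis by (simp add: l2_norm_def)
qed

lemma HJ_sqi:
  assumes "\<forall>j\<in>{1..q}. X j \<in> borel_measurable M" "J \<subseteq> {1..q}" "\<forall>j\<in>J. g j \<in> Hsp M X q j"
  shows "sqi M (\<lambda>w. \<Sum>j\<in>J. g j w)"
  by (rule sqi_sum) (use assms Hsp_sqi in blast)

lemma expand2:
  assumes "sqi M f" "sqi M g"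
  shows "integral\<^sup>L M (\<lambda>w. (x * f w + y * g w)\<^sup>2) =
     x\<^sup>2 * integral\<^sup>L M (\<lambda>w. (f w)\<^sup>2) + 2 * x * y * integral\<^sup>L M (\<lambda>w. f w * g w)
     + y\<^sup>2 * integral\<^sup>L M (\<lambda>w. (g w)\<^sup>2)"
proof -
  have e: "(\<lambda>w. (x * f w + y * g w)\<^sup>2) = (\<lambda>w. x\<^sup>2 * (f w)\<^sup>2 + (2 * x * y * (f w * g w) + y\<^sup>2 * (g w)\<^sup>2))"
    by (auto simp: power2_eq_square algebra_simps)
  show ?thesis unfolding e using assms sqi_prod[OF assms] by (simp add: sqi_def)
qed

lemma pair_bound:
  assumes Xm: "\<forall>j\<in>{1..q}. X j \<in> borel_measurable M"
    and rb: "\<And>J1 J2 h1 h2. J1 \<subseteq> {1..q} \<Longrightarrow> J2 \<subseteq> {1..q} \<Longrightarrow> J1 \<inter> J2 = {} \<Longrightarrow> card J1 \<le> qs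
      \<Longrightarrow> card J2 \<le> qs \<Longrightarrow> h1 \<in> HJ M X q J1 \<Longrightarrow> h2 \<in> HJ M X q J2 \<Longrightarrow> l2_norm M h1 \<noteq> 0
      \<Longrightarrow> l2_norm M h2 \<noteq> 0 \<Longrightarrow> l2_inner M h1 h2 / (l2_norm M h1 * l2_norm M h2) \<le> r"
    and r0: "0 \<le> r"
    and J: "J1 \<subseteq> {1..q}" "J2 \<subseteq> {1..q}" "J1 \<inter> J2 = {}" "card J1 \<le> qs" "card J2 \<le> qs"
    and g: "\<forall>j\<in>J1 \<union> J2. g j \<in> Hsp M X q j"
  shows "(1 - r) * (integral\<^sup>L M (\<lambda>w. (\<Sum>j\<in>J1. g j w)\<^sup>2) + integral\<^sup>L M (\<lambda>w. (\<Sum>j\<in>J2. g j w)\<^sup>2))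
     \<le> integral\<^sup>L M (\<lambda>w. ((\<Sum>j\<in>J1. g j w) + (\<Sum>j\<in>J2. g j w))\<^sup>2)"
proof -
  define h1 where "h1 = (\<lambda>w. \<Sum>j\<in>J1. g j w)"
  define h2 where "h2 = (\<lambda>w. \<Sum>j\<in>J2. g j w)"
  have s1: "sqi M h1" unfolding h1_def by (rule HJ_sqi[OF Xm J(1)]) (use g in auto)
  have s2: "sqi M h2" unfolding h2_def by (rule HJ_sqi[OF Xm J(2)]) (use g in auto)
  define a where "a = l2_norm M h1"
  define b where "b = l2_norm M h2"
  define s where "s = integral\<^sup>L M (\<lambda>w. h1 w * h2 w)"
  have a0: "0 \<le> a" "0 \<le> b" unfolding a_def b_def by (simp_all add: l2_norm_nonneg)
  have asq: "a\<^sup>2 = integral\<^sup>L M (\<lambda>w. (h1 w)\<^sup>2)" unfolding a_def by (rule l2_norm_sq)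
  have bsq: "b\<^sup>2 = integral\<^sup>L M (\<lambda>w. (h2 w)\<^sup>2)" unfolding b_def by (rule l2_norm_sq)
  have key: "- (r * a * b) \<le> s"
  proof (cases "a = 0 \<or> b = 0")
    case True
    then show ?thesis
    proof
      assume "a = 0"
      then have "s = 0" unfolding s_def using zero_inner[OF s1 s2] asq by simp
      then show ?thesis using \<open>a = 0\<close> by simp
    next
      assume "b = 0"
      then have "integral\<^sup>L M (\<lambda>w. h2 w * h1 w) = 0" using zero_inner[OF s2 s1] bsq by simp
      then have "s = 0" unfolding s_def by (simp add: mult.commute)
      then show ?thesis using \<open>b = 0\<close> by simp
    qed
  next
    case False
    define h2' where "h2' = (\<lambda>w. - h2 w)"
    have m1: "h1 \<in> HJ M X q J1" unfolding HJ_def h1_def using g by auto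
    have gn: "\<forall>j\<in>J2. (\<lambda>w. (-1) * g j w) \<in> Hsp M X q j" using g Hsp_scale by blast
    have "h2' = (\<lambda>w. \<Sum>j\<in>J2. (\<lambda>j w. (-1) * g j w) j w)"
      unfolding h2'_def h2_def by (simp add: sum_negf)
    then have m2: "h2' \<in> HJ M X q J2" unfolding HJ_def
      apply (intro CollectI exI[of _ "\<lambda>j w. (-1) * g j w"])
      using gn by simp
    have nb: "l2_norm M h2' = b" unfolding b_def h2'_def l2_norm_def l2_inner_def by simp
    have ni: "l2_inner M h1 h2' = - s" unfolding s_def h2'_def l2_inner_def by simp
    have "l2_inner M h1 h2' / (l2_norm M h1 * l2_norm M h2') \<le> r"
      by (rule rb[OF J m1 m2]) (use False nb a_def in auto)
    then have "- s / (a * b) \<le> r" using nb ni a_def by simp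
    moreover have "0 < a * b" using False a0 by simp
    ultimately have "- s \<le> r * (a * b)" using pos_divide_le_eq[of "a * b" "- s" r] by simp
    then show ?thesis by (simp add: mult.assoc)
  qed
  have ex: "integral\<^sup>L M (\<lambda>w. (h1 w + h2 w)\<^sup>2) = a\<^sup>2 + 2 * s + b\<^sup>2"
    using expand2[OF s1 s2, of 1 1] asq bsq s_def by simp
  have "0 \<le> r * (a - b)\<^sup>2" using r0 by simp
  then have "(1 - r) * (a\<^sup>2 + b\<^sup>2) \<le> a\<^sup>2 + 2 * s + b\<^sup>2" using key
    by (simp add: power2_eq_square algebra_simps)
  then show ?thesis using ex asq bsq unfolding h1_def h2_def by simp
qed

lemma ind_bound:
  assumes Xm: "\<forall>j\<in>{1..q}. X j \<in> borel_measurable M"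
    and rb: "\<And>J1 J2 h1 h2. J1 \<subseteq> {1..q} \<Longrightarrow> J2 \<subseteq> {1..q} \<Longrightarrow> J1 \<inter> J2 = {} \<Longrightarrow> card J1 \<le> qs
      \<Longrightarrow> card J2 \<le> qs \<Longrightarrow> h1 \<in> HJ M X q J1 \<Longrightarrow> h2 \<in> HJ M X q J2 \<Longrightarrow> l2_norm M h1 \<noteq> 0
      \<Longrightarrow> l2_norm M h2 \<noteq> 0 \<Longrightarrow> l2_inner M h1 h2 / (l2_norm M h1 * l2_norm M h2) \<le> r"
    and r0: "0 \<le> r" and r1: "r < 1"
  shows "\<forall>J g. J \<subseteq> {1..q} \<and> card J = n \<and> n \<le> 2 * qs \<and> (\<forall>j\<in>J. g j \<in> Hsp M X q j) \<longrightarrow>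
     (1 - r) ^ n * (\<Sum>j\<in>J. integral\<^sup>L M (\<lambda>w. (g j w)\<^sup>2)) \<le> integral\<^sup>L M (\<lambda>w. (\<Sum>j\<in>J. g j w)\<^sup>2)"
proof (induction n rule: less_induct)
  case (less n)
  show ?case
  proof (intro allI impI, elim conjE)
    fix J g assume J: "J \<subseteq> {1..q}" "card J = n" "n \<le> 2 * qs" "\<forall>j\<in>J. g j \<in> Hsp M X q j"
    have fin: "finite J" using J(1) finite_subset by blast
    have nn: "\<And>j. 0 \<le> integral\<^sup>L M (\<lambda>w. (g j w)\<^sup>2)" by (rule integral_nonneg_AE) auto
    have ps: "0 \<le> (\<Sum>j\<in>J. integral\<^sup>L M (\<lambda>w. (g j w)\<^sup>2))" by (rule sum_nonneg) (use nn in auto)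
    consider "n = 0" | "n = 1" | "n \<ge> 2" by linarith
    then show "(1 - r) ^ n * (\<Sum>j\<in>J. integral\<^sup>L M (\<lambda>w. (g j w)\<^sup>2)) \<le> integral\<^sup>L M (\<lambda>w. (\<Sum>j\<in>J. g j w)\<^sup>2)"
    proof cases
      case 1
      then have "J = {}" using J fin by simp
      then show ?thesis by simp
    next
      case 2
      then obtain j where "J = {j}" using J card_1_singletonE by metis
      moreover have "(1 - r) * integral\<^sup>L M (\<lambda>w. (g j w)\<^sup>2) \<le> integral\<^sup>L M (\<lambda>w. (g j w)\<^sup>2)"
        using mult_nonneg_nonneg[OF r0 nn[of j]] by (simp add: algebra_simps)
      ultimately show ?thesis using 2 by simp
    next
      case 3
      obtain J1 where J1: "J1 \<subseteq> J" "card J1 = n div 2" "finite J1"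
        using obtain_subset_with_card_n[of "n div 2" J] J(2) by auto
      define J2 where "J2 = J - J1"
      have cJ2: "card J2 = n - n div 2" unfolding J2_def using J1 J(2) fin by (simp add: card_Diff_subset)
      have d: "J1 \<inter> J2 = {}" "J = J1 \<union> J2" unfolding J2_def using J1 by auto
      have c1: "n div 2 < n" "n - n div 2 < n" "n div 2 \<le> qs" "n - n div 2 \<le> qs" using 3 J(3) by auto
      have sub: "J1 \<subseteq> {1..q}" "J2 \<subseteq> {1..q}" using J1 J(1) d by auto
      have gJ1: "\<forall>j\<in>J1. g j \<in> Hsp M X q j" using J1(1) J(4) by blast
      have gJ2: "\<forall>j\<in>J2. g j \<in> Hsp M X q j" using J(4) unfolding J2_def by blast
      have IH1: "(1 - r) ^ (n div 2) * (\<Sum>j\<in>J1. integral\<^sup>L M (\<lambda>w. (g j w)\<^sup>2)) \<le> integral\<^sup>L M (\<lambda>w. (\<Sum>j\<in>J1. g j w)\<^sup>2)"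
        using less[OF c1(1), rule_format, of J1 g] sub(1) J1(2) gJ1 J(3) by simp
      have IH2: "(1 - r) ^ (n - n div 2) * (\<Sum>j\<in>J2. integral\<^sup>L M (\<lambda>w. (g j w)\<^sup>2)) \<le> integral\<^sup>L M (\<lambda>w. (\<Sum>j\<in>J2. g j w)\<^sup>2)"
        using less[OF c1(2), rule_format, of J2 g] sub(2) cJ2 gJ2 J(3) by simp
      have pb: "(1 - r) * (integral\<^sup>L M (\<lambda>w. (\<Sum>j\<in>J1. g j w)\<^sup>2) + integral\<^sup>L M (\<lambda>w. (\<Sum>j\<in>J2. g j w)\<^sup>2))
         \<le> integral\<^sup>L M (\<lambda>w. ((\<Sum>j\<in>J1. g j w) + (\<Sum>j\<in>J2. g j w))\<^sup>2)"
        by (rule pair_bound[OF Xm rb r0 sub d(1) c1(3,4)[folded J1(2) cJ2]]) (use J d in auto)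
      have fin2: "finite J2" using fin J2_def by simp
      have split: "\<And>f. (\<Sum>j\<in>J. f j) = (\<Sum>j\<in>J1. f j) + (\<Sum>j\<in>J2. f j :: real)"
        using d J1(3) fin2 by (simp add: sum.union_disjoint)
      define A where "A = (\<Sum>j\<in>J1. integral\<^sup>L M (\<lambda>w. (g j w)\<^sup>2))"
      define B where "B = (\<Sum>j\<in>J2. integral\<^sup>L M (\<lambda>w. (g j w)\<^sup>2))"
      have A0: "0 \<le> A" unfolding A_def by (rule sum_nonneg) (use nn in auto)
      have B0: "0 \<le> B" unfolding B_def by (rule sum_nonneg) (use nn in auto)
      have q0: "0 \<le> 1 - r" "1 - r \<le> 1" using r0 r1 by auto
      have pw1: "(1 - r) ^ n \<le> (1 - r) * (1 - r) ^ (n div 2)"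
        using power_decreasing[of "Suc (n div 2)" n "1 - r"] q0 c1 by simp
      have pw2: "(1 - r) ^ n \<le> (1 - r) * (1 - r) ^ (n - n div 2)"
        using power_decreasing[of "Suc (n - n div 2)" n "1 - r"] q0 c1 by simp
      have "(1 - r) ^ n * (A + B) \<le> (1 - r) * ((1 - r) ^ (n div 2) * A) + (1 - r) * ((1 - r) ^ (n - n div 2) * B)"
        using mult_right_mono[OF pw1 A0] mult_right_mono[OF pw2 B0] by (simp add: algebra_simps)
      also have "\<dots> \<le> (1 - r) * (integral\<^sup>L M (\<lambda>w. (\<Sum>j\<in>J1. g j w)\<^sup>2) + integral\<^sup>L M (\<lambda>w. (\<Sum>j\<in>J2. g j w)\<^sup>2))"
        using mult_left_mono[OF IH1 q0(1)] mult_left_mono[OF IH2 q0(1)] unfolding A_def B_def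
        by (simp add: algebra_simps)
      also have "\<dots> \<le> integral\<^sup>L M (\<lambda>w. (\<Sum>j\<in>J. g j w)\<^sup>2)"
        using pb split[of "\<lambda>j. g j _"] by simp
      finally show ?thesis using split unfolding A_def B_def by simp
    qed
  qed
qed

lemma eps_set_lb:
  assumes P: "prob_space M" and q: "q \<ge> 1" and m: "m \<ge> 1"
    and e: "\<forall>J g. J \<subseteq> {1..q} \<and> card J \<le> m \<and> (\<forall>j\<in>J. g j \<in> Hsp M X q j) \<longrightarrow>
      (l2_norm M (\<lambda>\<omega>. \<Sum>j\<in>J. g j \<omega>))\<^sup>2 \<ge> (1 - e) * (\<Sum>j\<in>J. (l2_norm M (g j))\<^sup>2)"
  shows "0 \<le> e"
proof -
  interpret prob_space M by (rule P)
  have h: "(\<lambda>w. 1) \<in> Hsp M X q q" unfolding Hsp_def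
    by (intro CollectI exI[of _ "\<lambda>x. 1"]) simp
  have i: "integral\<^sup>L M (\<lambda>w. (1::real)\<^sup>2) = 1" by (simp add: prob_space)
  have "(l2_norm M (\<lambda>\<omega>. \<Sum>j\<in>{q}. (\<lambda>j w. 1) j \<omega>))\<^sup>2 \<ge> (1 - e) * (\<Sum>j\<in>{q}. (l2_norm M ((\<lambda>j w. 1) j))\<^sup>2)"
    using e[rule_format, of "{q}" "\<lambda>j w. 1"] h q m by simp
  then show ?thesis using i by (simp add: l2_norm_sq)
qed

lemma dir2:
  assumes P: "prob_space M" and q: "q \<ge> 1" and qs: "qs \<ge> 1"
    and Xm: "\<forall>j\<in>{1..q}. X j \<in> borel_measurable M"
    and rh: "rho M X q qs < 1"
  shows "eps M X q (2 * qs) < 1"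
proof -
  obtain r0 where r0: "rho M X q qs < ereal r0" "r0 < 1" using ereal_dense2[OF rh] by auto
  define r where "r = max r0 0"
  have r: "0 \<le> r" "r < 1" using r0 unfolding r_def by auto
  have rb: "l2_inner M h1 h2 / (l2_norm M h1 * l2_norm M h2) \<le> r"
    if "J1 \<subseteq> {1..q}" "J2 \<subseteq> {1..q}" "J1 \<inter> J2 = {}" "card J1 \<le> qs"
      "card J2 \<le> qs" "h1 \<in> HJ M X q J1" "h2 \<in> HJ M X q J2" "l2_norm M h1 \<noteq> 0"
      "l2_norm M h2 \<noteq> 0" for J1 J2 h1 h2
  proof -
    have "ereal (l2_inner M h1 h2 / (l2_norm M h1 * l2_norm M h2)) \<le> rho M X q qs"
      unfolding rho_def by (rule Sup_upper) (use that in blast)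
    then have "ereal (l2_inner M h1 h2 / (l2_norm M h1 * l2_norm M h2)) < ereal r0"
      using order_le_less_trans r0(1) by blast
    then show ?thesis unfolding r_def by simp
  qed
  have IB: "\<forall>J g. J \<subseteq> {1..q} \<and> card J = n \<and> n \<le> 2 * qs \<and> (\<forall>j\<in>J. g j \<in> Hsp M X q j) \<longrightarrow>
     (1 - r) ^ n * (\<Sum>j\<in>J. integral\<^sup>L M (\<lambda>w. (g j w)\<^sup>2)) \<le> integral\<^sup>L M (\<lambda>w. (\<Sum>j\<in>J. g j w)\<^sup>2)" for n
    by (rule ind_bound[OF Xm _ r]) (rule rb; assumption)
  define c where "c = (1 - r) ^ (2 * qs)"
  let ?S = "{e. \<forall>J g. J \<subseteq> {1..q} \<and> card J \<le> 2 * qs \<and> (\<forall>j\<in>J. g j \<in> Hsp M X q j) \<longrightarrow>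
      (l2_norm M (\<lambda>\<omega>. \<Sum>j\<in>J. g j \<omega>))\<^sup>2 \<ge> (1 - e) * (\<Sum>j\<in>J. (l2_norm M (g j))\<^sup>2)}"
  have mem: "1 - c \<in> ?S"
  proof (intro CollectI allI impI, elim conjE)
    fix J g assume J: "J \<subseteq> {1..q}" "card J \<le> 2 * qs" "\<forall>j\<in>J. g j \<in> Hsp M X q j"
    have nn: "\<And>j. 0 \<le> integral\<^sup>L M (\<lambda>w. (g j w)\<^sup>2)" by (rule integral_nonneg_AE) auto
    have ps: "0 \<le> (\<Sum>j\<in>J. integral\<^sup>L M (\<lambda>w. (g j w)\<^sup>2))" by (rule sum_nonneg) (use nn in auto)
    have "c \<le> (1 - r) ^ card J" unfolding c_def
      by (rule power_decreasing) (use J r in auto)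
    then have "c * (\<Sum>j\<in>J. integral\<^sup>L M (\<lambda>w. (g j w)\<^sup>2)) \<le> (1 - r) ^ card J * (\<Sum>j\<in>J. integral\<^sup>L M (\<lambda>w. (g j w)\<^sup>2))"
      using ps by (rule mult_right_mono)
    also have "\<dots> \<le> integral\<^sup>L M (\<lambda>w. (\<Sum>j\<in>J. g j w)\<^sup>2)"
      using IB[of "card J"] J by blast
    finally show "(1 - (1 - c)) * (\<Sum>j\<in>J. (l2_norm M (g j))\<^sup>2) \<le> (l2_norm M (\<lambda>\<omega>. \<Sum>j\<in>J. g j \<omega>))\<^sup>2"
      by (simp add: l2_norm_sq)
  qed
  have bdd: "bdd_below ?S"
    by (rule bdd_belowI[of _ 0]) (use eps_set_lb[OF P q, of "2 * qs"] qs in auto)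
  have "eps M X q (2 * qs) \<le> 1 - c" unfolding eps_def by (rule cInf_lower[OF mem bdd])
  moreover have "0 < c" unfolding c_def using r by simp
  ultimately show ?thesis by simp
qed

lemma l2_norm_scale_sq: "(l2_norm M (\<lambda>w. k * f w))\<^sup>2 = k\<^sup>2 * integral\<^sup>L M (\<lambda>w. (f w)\<^sup>2)"
  unfolding l2_norm_sq by (simp add: power_mult_distrib)

lemma ratio_bound:
  assumes Xm: "\<forall>j\<in>{1..q}. X j \<in> borel_measurable M" and qs: "qs \<ge> 1"
    and e: "\<forall>J g. J \<subseteq> {1..q} \<and> card J \<le> 2 * qs \<and> (\<forall>j\<in>J. g j \<in> Hsp M X q j) \<longrightarrow>
      (l2_norm M (\<lambda>\<omega>. \<Sum>j\<in>J. g j \<omega>))\<^sup>2 \<ge> (1 - e) * (\<Sum>j\<in>J. (l2_norm M (g j))\<^sup>2)"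
    and e1: "e < 1"
    and J: "J1 \<subseteq> {1..q}" "J2 \<subseteq> {1..q}" "J1 \<inter> J2 = {}" "card J1 \<le> qs" "card J2 \<le> qs"
    and h: "h1 \<in> HJ M X q J1" "h2 \<in> HJ M X q J2" "l2_norm M h1 \<noteq> 0" "l2_norm M h2 \<noteq> 0"
  shows "l2_inner M h1 h2 / (l2_norm M h1 * l2_norm M h2) \<le> 1 - (1 - e) / real qs"
proof -
  obtain g1 where g1: "h1 = (\<lambda>w. \<Sum>j\<in>J1. g1 j w)" "\<forall>j\<in>J1. g1 j \<in> Hsp M X q j"
    using h(1) unfolding HJ_def by blast
  obtain g2 where g2: "h2 = (\<lambda>w. \<Sum>j\<in>J2. g2 j w)" "\<forall>j\<in>J2. g2 j \<in> Hsp M X q j"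
    using h(2) unfolding HJ_def by blast
  have fin: "finite J1" "finite J2" using J(1,2) finite_subset by auto
  define a where "a = l2_norm M h1"
  define b where "b = l2_norm M h2"
  define s where "s = integral\<^sup>L M (\<lambda>w. h1 w * h2 w)"
  define c where "c = 1 - e"
  have c0: "0 < c" using e1 c_def by simp
  have a0: "0 < a" "0 < b" using h(3,4) l2_norm_nonneg[of M h1] l2_norm_nonneg[of M h2]
    unfolding a_def b_def by auto
  have s1: "sqi M h1" unfolding g1(1) by (rule HJ_sqi[OF Xm J(1) g1(2)])
  have s2: "sqi M h2" unfolding g2(1) by (rule HJ_sqi[OF Xm J(2) g2(2)])
  have asq: "a\<^sup>2 = integral\<^sup>L M (\<lambda>w. (h1 w)\<^sup>2)" unfolding a_def by (rule l2_norm_sq)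
  have bsq: "b\<^sup>2 = integral\<^sup>L M (\<lambda>w. (h2 w)\<^sup>2)" unfolding b_def by (rule l2_norm_sq)
  define g where "g = (\<lambda>j. if j \<in> J1 then (\<lambda>w. (1 / a) * g1 j w) else (\<lambda>w. (- 1 / b) * g2 j w))"
  have gH: "\<forall>j\<in>J1 \<union> J2. g j \<in> Hsp M X q j"
  proof
    fix j assume j: "j \<in> J1 \<union> J2"
    show "g j \<in> Hsp M X q j"
    proof (cases "j \<in> J1")
      case True
      have "(\<lambda>w. (1 / a) * g1 j w) \<in> Hsp M X q j" using g1(2) True by (intro Hsp_scale) auto
      then show ?thesis unfolding g_def using True by (simp only: if_True)
    next
      case False
      have "(\<lambda>w. (- 1 / b) * g2 j w) \<in> Hsp M X q j" using g2(2) False j by (intro Hsp_scale) auto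
      then show ?thesis unfolding g_def using False by (simp only: if_False)
    qed
  qed
  have cU: "card (J1 \<union> J2) \<le> 2 * qs" using card_Un_le[of J1 J2] J(4,5) by simp
  have ineq: "(1 - e) * (\<Sum>j\<in>J1 \<union> J2. (l2_norm M (g j))\<^sup>2) \<le> (l2_norm M (\<lambda>\<omega>. \<Sum>j\<in>J1 \<union> J2. g j \<omega>))\<^sup>2"
    using e[rule_format, of "J1 \<union> J2" g] J(1,2) cU gH by auto
  have sumg: "(\<lambda>\<omega>. \<Sum>j\<in>J1 \<union> J2. g j \<omega>) = (\<lambda>w. (1 / a) * h1 w + (- 1 / b) * h2 w)"
  proof
    fix w
    have "(\<Sum>j\<in>J1 \<union> J2. g j w) = (\<Sum>j\<in>J1. g j w) + (\<Sum>j\<in>J2. g j w)"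
      using fin J(3) by (simp add: sum.union_disjoint)
    also have "(\<Sum>j\<in>J1. g j w) = (\<Sum>j\<in>J1. (1 / a) * g1 j w)" unfolding g_def by simp
    also have "(\<Sum>j\<in>J2. g j w) = (\<Sum>j\<in>J2. (- 1 / b) * g2 j w)"
      unfolding g_def using J(3) by (intro sum.cong) auto
    finally show "(\<Sum>j\<in>J1 \<union> J2. g j w) = (1 / a) * h1 w + (- 1 / b) * h2 w"
      unfolding g1(1) g2(1) by (simp add: sum_distrib_left)
  qed
  have lhs: "(l2_norm M (\<lambda>\<omega>. \<Sum>j\<in>J1 \<union> J2. g j \<omega>))\<^sup>2 = 2 - 2 * (s / (a * b))"
    unfolding sumg l2_norm_sq expand2[OF s1 s2] s_def[symmetric] asq[symmetric] bsq[symmetric]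
    using a0 by (simp add: field_simps power2_eq_square)
  define A where "A = (\<Sum>j\<in>J1. integral\<^sup>L M (\<lambda>w. (g1 j w)\<^sup>2))"
  define B where "B = (\<Sum>j\<in>J2. integral\<^sup>L M (\<lambda>w. (g2 j w)\<^sup>2))"
  have rhs: "(\<Sum>j\<in>J1 \<union> J2. (l2_norm M (g j))\<^sup>2) = A / a\<^sup>2 + B / b\<^sup>2"
  proof -
    have "(\<Sum>j\<in>J1 \<union> J2. (l2_norm M (g j))\<^sup>2) = (\<Sum>j\<in>J1. (l2_norm M (g j))\<^sup>2) + (\<Sum>j\<in>J2. (l2_norm M (g j))\<^sup>2)"
      using fin J(3) by (simp add: sum.union_disjoint)
    also have "(\<Sum>j\<in>J1. (l2_norm M (g j))\<^sup>2) = (\<Sum>j\<in>J1. (1 / a)\<^sup>2 * integral\<^sup>L M (\<lambda>w. (g1 j w)\<^sup>2))"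
      unfolding g_def by (intro sum.cong) (auto simp: l2_norm_sq power_divide)
    also have "(\<Sum>j\<in>J2. (l2_norm M (g j))\<^sup>2) = (\<Sum>j\<in>J2. (- 1 / b)\<^sup>2 * integral\<^sup>L M (\<lambda>w. (g2 j w)\<^sup>2))"
      unfolding g_def using J(3) by (intro sum.cong) (auto simp: l2_norm_sq power_divide)
    finally show ?thesis unfolding A_def B_def
      by (simp add: sum_divide_distrib power_divide)
  qed
  have nn1: "\<And>j. 0 \<le> integral\<^sup>L M (\<lambda>w. (g1 j w)\<^sup>2)" by (rule integral_nonneg_AE) auto
  have nn2: "\<And>j. 0 \<le> integral\<^sup>L M (\<lambda>w. (g2 j w)\<^sup>2)" by (rule integral_nonneg_AE) auto
  have A0: "0 \<le> A" unfolding A_def by (rule sum_nonneg) (use nn1 in auto)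
  have B0: "0 \<le> B" unfolding B_def by (rule sum_nonneg) (use nn2 in auto)
  have aA: "a\<^sup>2 \<le> real qs * A"
  proof -
    have "a\<^sup>2 \<le> real (card J1) * A" unfolding asq g1(1) A_def
      by (rule int_sum_sq_le[OF fin(1)]) (use g1(2) Xm J(1) Hsp_sqi in blast)
    also have "\<dots> \<le> real qs * A" using J(4) A0 by (intro mult_right_mono) auto
    finally show ?thesis .
  qed
  have bB: "b\<^sup>2 \<le> real qs * B"
  proof -
    have "b\<^sup>2 \<le> real (card J2) * B" unfolding bsq g2(1) B_def
      by (rule int_sum_sq_le[OF fin(2)]) (use g2(2) Xm J(2) Hsp_sqi in blast)
    also have "\<dots> \<le> real qs * B" using J(5) B0 by (intro mult_right_mono) auto
    finally show ?thesis .
  qed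
  have qpos: "0 < real qs" using qs by simp
  have A1: "1 / real qs \<le> A / a\<^sup>2" using aA a0 qpos by (simp add: field_simps)
  have B1: "1 / real qs \<le> B / b\<^sup>2" using bB a0 qpos by (simp add: field_simps)
  have "c * (2 / real qs) \<le> c * (A / a\<^sup>2 + B / b\<^sup>2)"
    using A1 B1 c0 by (intro mult_left_mono) auto
  also have "\<dots> \<le> 2 - 2 * (s / (a * b))" using ineq lhs rhs c_def by simp
  finally have H: "c * (2 / real qs) \<le> 2 - 2 * (s / (a * b))" .
  have "c * (2 / real qs) = 2 * (c / real qs)" by simp
  then have "s / (a * b) \<le> 1 - c / real qs" using H by linarith
  then show ?thesis unfolding l2_inner_def s_def a_def b_def c_def by simp
qed

lemma dir1:
  assumes Xm: "\<forall>j\<in>{1..q}. X j \<in> borel_measurable M" and qs: "qs \<ge> 1"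
    and ep: "eps M X q (2 * qs) < 1"
  shows "rho M X q qs < 1"
proof -
  let ?S = "{e. \<forall>J g. J \<subseteq> {1..q} \<and> card J \<le> 2 * qs \<and> (\<forall>j\<in>J. g j \<in> Hsp M X q j) \<longrightarrow>
      (l2_norm M (\<lambda>\<omega>. \<Sum>j\<in>J. g j \<omega>))\<^sup>2 \<ge> (1 - e) * (\<Sum>j\<in>J. (l2_norm M (g j))\<^sup>2)}"
  have "1 \<in> ?S" by simp
  then have ne: "?S \<noteq> {}" by blast
  obtain e where e: "e \<in> ?S" "e < 1" using cInf_lessD[OF ne ep[unfolded eps_def]] by blast
  have "rho M X q qs \<le> ereal (1 - (1 - e) / real qs)"
    unfolding rho_def
  proof (rule Sup_least)
    fix x assume "x \<in> {ereal (l2_inner M h1 h2 / (l2_norm M h1 * l2_norm M h2)) | J1 J2 h1 h2.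
      J1 \<subseteq> {1..q} \<and> J2 \<subseteq> {1..q} \<and> J1 \<inter> J2 = {} \<and> card J1 \<le> qs \<and> card J2 \<le> qs
      \<and> h1 \<in> HJ M X q J1 \<and> h2 \<in> HJ M X q J2 \<and> l2_norm M h1 \<noteq> 0 \<and> l2_norm M h2 \<noteq> 0}"
    then obtain J1 J2 h1 h2 where x: "x = ereal (l2_inner M h1 h2 / (l2_norm M h1 * l2_norm M h2))"
      and J: "J1 \<subseteq> {1..q}" "J2 \<subseteq> {1..q}" "J1 \<inter> J2 = {}" "card J1 \<le> qs" "card J2 \<le> qs"
      and h: "h1 \<in> HJ M X q J1" "h2 \<in> HJ M X q J2" "l2_norm M h1 \<noteq> 0" "l2_norm M h2 \<noteq> 0"
      by blast
    show "x \<le> ereal (1 - (1 - e) / real qs)"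
      unfolding x using ratio_bound[OF Xm qs _ e(2) J h] e(1) by simp
  qed
  also have "\<dots> < 1" using e(2) qs by simp
  finally show ?thesis .
qed

theorem lemma2:
  fixes M :: "'a measure" and X :: "nat \<Rightarrow> 'a \<Rightarrow> real" and q qs :: nat
  assumes "prob_space M"
    and "q \<ge> 1" and "qs \<ge> 1"
    and "\<forall>j\<in>{1..q}. X j \<in> borel_measurable M"
  shows "rho M X q qs < 1 \<longleftrightarrow> eps M X q (2 * qs) < 1"
  using dir1[OF assms(4,3)] dir2[OF assms] by blast

end
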